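(* Let $G_0=(V,E_0)$ and $G_1=(V,E_1)$ be strongly connected unweighted directed graphs on the same $n$-vertex set, let $n_p,n_q\ge1$ be integers, let $S_1\subseteq V$ with $|S_1|=n_p$, let $a\in V$, and let $S_2=N^{in}_{G_0}(a,n_q)$. Let $\ell_0=\max_{x\in V}d_{G_0}(S_1,x)$, let $\epsilon\in[0,1/2]$, and suppose that both $\max_{x\in V}d_{G_1}(S_1,x)$ and $d_{G_1}(S_1,a)$ lie in $[\ell_0(1-\epsilon),\ell_0(1+\epsilon)]$, and that $S_1\cap S_2\neq\emptyset$. Write $\delta=\mathrm{inecc}_{G_1}(a)$. Suppose moreover that either (i) $E_1\subseteq E_0$ and $d_{G_0}(S_1,a)\ge(1-\epsilon)\ell_0$; or (ii) $E_0\subseteq E_1$ and $\mathrm{inecc}_{G_1}(a)\ge(1-\epsilon)\,\mathrm{inecc}_{G_0}(a)$. Then for all reals $p,q>0$ with $p+q=1$, in the graph $G_1$ either $d_{G_1}(S_1,x)\le\lfloor(p+2\epsilon)\delta\rfloor$ for every $x\in V$, or $d_{G_1}(x,S_2)\le\lceil(q+2\epsilon)\delta\rceil$ for every $x\in V$.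
   Context: $d_G(u,v)$ is the directed shortest-path distance in $G$; $d_G(A,u)=\min_{v\in A}d_G(v,u)$, $d_G(u,A)=\min_{v\in A}d_G(u,v)$; $\mathrm{inecc}_G(a)=\max_{x}d_G(x,a)$. $N^{in}_G(a,\ell)$ denotes a set of $\ell$ vertices $x$ with the smallest values of $d_G(x,a)$ (ties broken arbitrarily), i.e. the $\ell$ closest incoming vertices of $a$. *)

theory Defs
  imports Main "HOL-Library.Library"
begin

definition digraph :: "'a set \<Rightarrow> ('a \<times> 'a) set \<Rightarrow> bool" where
  "digraph V E \<longleftrightarrow> finite V \<and> E \<subseteq> V \<times> V"

definition strongly_connected :: "'a set \<Rightarrow> ('a \<times> 'a) set \<Rightarrow> bool" where
  "strongly_connected V E \<longleftrightarrow> (\<forall>u\<in>V. \<forall>v\<in>V. (u, v) \<in> E\<^sup>*)"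

text \<open>Shortest-path distance: the least number of edges on a directed walk from u to v
  (meaningful when v is reachable from u, e.g. in a strongly connected graph).\<close>
definition gdist :: "('a \<times> 'a) set \<Rightarrow> 'a \<Rightarrow> 'a \<Rightarrow> nat" where
  "gdist E u v = (LEAST k. (u, v) \<in> E ^^ k)"

definition gdist_from_set :: "('a \<times> 'a) set \<Rightarrow> 'a set \<Rightarrow> 'a \<Rightarrow> nat" where
  "gdist_from_set E A u = Min ((\<lambda>v. gdist E v u) ` A)"

definition gdist_to_set :: "('a \<times> 'a) set \<Rightarrow> 'a \<Rightarrow> 'a set \<Rightarrow> nat" where
  "gdist_to_set E u A = Min ((\<lambda>v. gdist E u v) ` A)"

definition inecc :: "'a set \<Rightarrow> ('a \<times> 'a) set \<Rightarrow> 'a \<Rightarrow> nat" where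
  "inecc V E a = Max ((\<lambda>x. gdist E x a) ` V)"

text \<open>S is a valid choice of N^in(a,l): a set of l vertices with smallest d(x,a),
  ties broken arbitrarily.\<close>
definition is_N_in :: "'a set \<Rightarrow> ('a \<times> 'a) set \<Rightarrow> 'a \<Rightarrow> nat \<Rightarrow> 'a set \<Rightarrow> bool" where
  "is_N_in V E a l S \<longleftrightarrow> S \<subseteq> V \<and> card S = l \<and>
     (\<forall>x\<in>S. \<forall>y\<in>V - S. gdist E x a \<le> gdist E y a)"

end

theory Submission
  imports Defs
begin

lemma relpow_sub: fixes E F :: "('a \<times> 'a) set" shows "E \<subseteq> F \<Longrightarrow> E ^^ n \<subseteq> F ^^ n"
  by (induction n) (simp_all add: relcomp_mono)

lemma gdist_le: "(u, v) \<in> E ^^ k \<Longrightarrow> gdist E u v \<le> k"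
  unfolding gdist_def by (rule Least_le)

lemma gdist_path: "(u, v) \<in> E\<^sup>* \<Longrightarrow> (u, v) \<in> E ^^ gdist E u v"
  unfolding gdist_def using rtrancl_power by (metis LeastI)

lemma gdist_mono: "E \<subseteq> F \<Longrightarrow> (u, v) \<in> E\<^sup>* \<Longrightarrow> gdist F u v \<le> gdist E u v"
proof -
  assume EF: "E \<subseteq> F" and r: "(u, v) \<in> E\<^sup>*"
  have "(u, v) \<in> E ^^ gdist E u v" using gdist_path[OF r] .
  hence "(u, v) \<in> F ^^ gdist E u v" using relpow_sub[OF EF] by blast
  thus ?thesis by (rule gdist_le)
qed

lemma relpow_in_V: "(u, v) \<in> E ^^ n \<Longrightarrow> E \<subseteq> V \<times> V \<Longrightarrow> u \<in> V \<Longrightarrow> v \<in> V"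
  by (induction n arbitrary: v) auto

lemma to_set_le: "finite A \<Longrightarrow> v \<in> A \<Longrightarrow> gdist_to_set E u A \<le> gdist E u v"
  unfolding gdist_to_set_def by simp

lemma from_set_le: "finite A \<Longrightarrow> v \<in> A \<Longrightarrow> gdist_from_set E A u \<le> gdist E v u"
  unfolding gdist_from_set_def by simp

lemma from_set_mono:
  assumes "finite A" "A \<noteq> {}" "E \<subseteq> F" "\<forall>v\<in>A. (v, u) \<in> E\<^sup>*"
  shows "gdist_from_set F A u \<le> gdist_from_set E A u"
proof -
  obtain v where v: "v \<in> A" "gdist_from_set E A u = gdist E v u"
    unfolding gdist_from_set_def using assms(1,2)
    by (metis (no_types, lifting) Min_in finite_imageI image_iff image_is_empty)
  have "gdist_from_set F A u \<le> gdist F v u" using from_set_le[OF assms(1) v(1)] .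
  also have "\<dots> \<le> gdist E v u" using gdist_mono[OF assms(3)] assms(4) v(1) by blast
  finally show ?thesis using v by simp
qed

lemma key:
  assumes V: "finite V" and E0V: "E0 \<subseteq> V \<times> V"
    and EE0: "E \<subseteq> E0" and EE1: "E \<subseteq> E1"
    and y: "y \<in> V" and path: "(y, a) \<in> E ^^ k"
    and S2: "is_N_in V E0 a nq S2" and s: "s \<in> S2"
    and D: "gdist E0 s a = D" "D \<ge> 1"
  shows "int (gdist_to_set E1 y S2) \<le> max 0 (int k + 1 - int D)"
proof -
  have fin: "finite S2" using S2 V unfolding is_N_in_def using finite_subset by blast
  have inS2: "z \<in> S2" if "z \<in> V" "gdist E0 z a < D" for z
    using S2 s that D unfolding is_N_in_def by force
  show ?thesis
  proof (cases "k < D")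
    case True
    have "gdist E0 y a \<le> k" using gdist_le[of y a k E0] path relpow_sub[OF EE0, of k] by blast
    hence yS: "y \<in> S2" using inS2 y True by simp
    have "gdist_to_set E1 y S2 \<le> gdist E1 y y" using to_set_le[OF fin yS] .
    also have "gdist E1 y y = 0" using gdist_le[OF relpow_0_I[of y E1]] by simp
    finally show ?thesis by simp
  next
    case False
    define m where "m = k + 1 - D"
    have kk: "k = m + (D - 1)" using False D unfolding m_def by simp
    have "(y, a) \<in> E ^^ (m + (D - 1))" using path kk by simp
    hence "(y, a) \<in> E ^^ m O E ^^ (D - 1)" by (simp only: relpow_add)
    then obtain z where z: "(y, z) \<in> E ^^ m" "(z, a) \<in> E ^^ (D - 1)" by blast
    have zV: "z \<in> V" using relpow_in_V[OF z(1)] EE0 E0V y by blast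
    have "gdist E0 z a \<le> D - 1" using gdist_le[of z a "D - 1" E0] z(2) relpow_sub[OF EE0, of "D - 1"] by blast
    hence zS: "z \<in> S2" using inS2 zV D by simp
    have "gdist_to_set E1 y S2 \<le> gdist E1 y z" using to_set_le[OF fin zS] .
    also have "\<dots> \<le> m" using gdist_le[of y z m E1] z(1) relpow_sub[OF EE1, of m] by blast
    finally show ?thesis unfolding m_def using False by simp
  qed
qed


lemma int_aux1: "(x::int) - y < c \<Longrightarrow> x + 1 - y \<le> c" by arith
lemma int_aux2: "(u::int) \<le> max 0 X \<Longrightarrow> 0 \<le> c \<Longrightarrow> X \<le> c \<Longrightarrow> u \<le> c" by simp

lemma arith_i:
  fixes e p q d L0 L1 D k :: real
  assumes eps: "0 \<le> e" "e \<le> 1/2" and pq: "p > 0" "q > 0" "p + q = 1" and d0: "d \<ge> 0"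
    and L1big: "(p + 2 * e) * d < L1" and L1L0: "L1 \<le> L0 * (1 + e)"
    and Dl: "D \<ge> (1 - e) * L0" and kd: "k \<le> d"
  shows "k - D < (q + 2 * e) * d \<and> D > 0"
proof -
  have qp: "q = 1 - p" using pq by simp
  have pd: "(p + 2 * e) * d \<ge> 0" using pq eps d0 by simp
  have A: "(1 - e) * ((p + 2 * e) * d) < (1 - e) * (L0 * (1 + e))"
    using L1big L1L0 eps by (intro mult_strict_left_mono) auto
  have B: "(1 + e) * ((q + 2 * e) * d) \<ge> (1 + e) * d - (1 - e) * ((p + 2 * e) * d)"
  proof -
    have "(1 + e) * (q + 2 * e) - (1 + e) + (1 - e) * (p + 2 * e) = e * (4 - 2 * p)"
      unfolding qp by (simp add: algebra_simps)
    moreover have "e * (4 - 2 * p) \<ge> 0" using eps pq by simp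
    ultimately have "(1 + e) * (q + 2 * e) - (1 + e) + (1 - e) * (p + 2 * e) \<ge> 0" by simp
    hence "((1 + e) * (q + 2 * e) - (1 + e) + (1 - e) * (p + 2 * e)) * d \<ge> 0" using d0 by simp
    thus ?thesis by (simp add: algebra_simps)
  qed
  have "(1 + e) * (k - D) \<le> (1 + e) * (d - (1 - e) * L0)"
    using kd Dl eps by (intro mult_left_mono) auto
  also have "\<dots> = (1 + e) * d - (1 - e) * (L0 * (1 + e))" by (simp add: algebra_simps)
  also have "\<dots> < (1 + e) * d - (1 - e) * ((p + 2 * e) * d)" using A by linarith
  also have "\<dots> \<le> (1 + e) * ((q + 2 * e) * d)" using B by linarith
  finally have "(1 + e) * (k - D) < (1 + e) * ((q + 2 * e) * d)" .
  hence r1: "k - D < (q + 2 * e) * d" using eps by simp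
  have "L0 > 0"
  proof (rule ccontr)
    assume "\<not> L0 > 0"
    hence "L0 * (1 + e) \<le> 0" using eps by (simp add: mult_nonpos_nonneg)
    thus False using L1big L1L0 pd by linarith
  qed
  hence "(1 - e) * L0 > 0" using eps by simp
  thus ?thesis using r1 Dl by simp
qed

lemma arith_ii:
  fixes e p q d L0 L1 D k :: real
  assumes eps: "0 \<le> e" "e \<le> 1/2" and pq: "p > 0" "q > 0" "p + q = 1" and d0: "d \<ge> 0"
    and L1big: "(p + 2 * e) * d < L1" and L1L0: "L1 \<le> L0"
    and Dl: "D \<ge> (1 - e) * L0" and kd: "(1 - e) * k \<le> d"
  shows "k - D < (q + 2 * e) * d \<and> D > 0"
proof -
  have qp: "q = 1 - p" using pq by simp
  have pd: "(p + 2 * e) * d \<ge> 0" using pq eps d0 by simp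
  have Dl2: "D > (1 - e) * ((p + 2 * e) * d)"
  proof -
    have "(1 - e) * ((p + 2 * e) * d) < (1 - e) * L1"
      using L1big eps by (intro mult_strict_left_mono) auto
    also have "\<dots> \<le> (1 - e) * L0" using L1L0 eps by (intro mult_left_mono) auto
    finally show ?thesis using Dl by linarith
  qed
  have G: "(1 - e) * ((q + 2 * e) * d) \<ge> d - (1 - e) * ((1 - e) * ((p + 2 * e) * d))"
  proof -
    have e1: "e * (1 - (1 - e) * (4 - p - 2 * e)) \<le> 0"
    proof -
      have "(1 - e) * (4 - p - 2 * e) \<ge> (1/2) * (4 - p - 2 * e)"
        using eps pq by (intro mult_right_mono) auto
      moreover have "(1/2) * (4 - p - 2 * e) \<ge> 1" using eps pq by simp
      ultimately have "1 - (1 - e) * (4 - p - 2 * e) \<le> 0" by linarith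
      thus ?thesis using eps by (simp add: mult_nonneg_nonpos)
    qed
    have "(1 - e) * (q + 2 * e) - 1 + (1 - e) * ((1 - e) * (p + 2 * e))
           = - (e * (1 - (1 - e) * (4 - p - 2 * e)))"
      unfolding qp by (simp add: algebra_simps)
    hence "(1 - e) * (q + 2 * e) - 1 + (1 - e) * ((1 - e) * (p + 2 * e)) \<ge> 0" using e1 by simp
    hence "((1 - e) * (q + 2 * e) - 1 + (1 - e) * ((1 - e) * (p + 2 * e))) * d \<ge> 0"
      using d0 by simp
    thus ?thesis by (simp add: algebra_simps)
  qed
  have "(1 - e) * D > (1 - e) * ((1 - e) * ((p + 2 * e) * d))"
    using Dl2 eps by (intro mult_strict_left_mono) auto
  hence "(1 - e) * (k - D) < (1 - e) * ((q + 2 * e) * d)" using kd G by (simp add: algebra_simps)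
  hence r1: "k - D < (q + 2 * e) * d" using eps by simp
  have "(1 - e) * ((p + 2 * e) * d) \<ge> 0" using pd eps by simp
  thus ?thesis using r1 Dl2 by simp
qed
theorem lemma3p3:
  fixes V :: "'a set" and E0 E1 :: "('a \<times> 'a) set"
    and n n_p n_q :: nat and S1 S2 :: "'a set" and a :: 'a
    and \<epsilon> :: real
  assumes G0: "digraph V E0" "strongly_connected V E0"
      and G1: "digraph V E1" "strongly_connected V E1"
      and n: "card V = n"
      and np: "n_p \<ge> 1" and nq: "n_q \<ge> 1"
      and S1: "S1 \<subseteq> V" "card S1 = n_p"
      and a: "a \<in> V"
      and S2: "is_N_in V E0 a n_q S2"
      and eps: "0 \<le> \<epsilon>" "\<epsilon> \<le> 1/2"
      and ecc1: "real (Max ((\<lambda>x. gdist_from_set E1 S1 x) ` V))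
                   \<ge> real (Max ((\<lambda>x. gdist_from_set E0 S1 x) ` V)) * (1 - \<epsilon>)"
                "real (Max ((\<lambda>x. gdist_from_set E1 S1 x) ` V))
                   \<le> real (Max ((\<lambda>x. gdist_from_set E0 S1 x) ` V)) * (1 + \<epsilon>)"
      and da1: "real (gdist_from_set E1 S1 a)
                   \<ge> real (Max ((\<lambda>x. gdist_from_set E0 S1 x) ` V)) * (1 - \<epsilon>)"
               "real (gdist_from_set E1 S1 a)
                   \<le> real (Max ((\<lambda>x. gdist_from_set E0 S1 x) ` V)) * (1 + \<epsilon>)"
      and meet: "S1 \<inter> S2 \<noteq> {}"
      and cases: "(E1 \<subseteq> E0 \<and> real (gdist_from_set E0 S1 a)
                      \<ge> (1 - \<epsilon>) * real (Max ((\<lambda>x. gdist_from_set E0 S1 x) ` V)))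
                \<or> (E0 \<subseteq> E1 \<and> real (inecc V E1 a) \<ge> (1 - \<epsilon>) * real (inecc V E0 a))"
  shows "\<forall>p q :: real. p > 0 \<longrightarrow> q > 0 \<longrightarrow> p + q = 1 \<longrightarrow>
           ((\<forall>x\<in>V. int (gdist_from_set E1 S1 x) \<le> \<lfloor>(p + 2 * \<epsilon>) * real (inecc V E1 a)\<rfloor>)
          \<or> (\<forall>x\<in>V. int (gdist_to_set E1 x S2) \<le> \<lceil>(q + 2 * \<epsilon>) * real (inecc V E1 a)\<rceil>))"
proof (intro allI impI)
  fix p q :: real
  assume pq: "p > 0" "q > 0" "p + q = 1"
  define \<delta> where "\<delta> = real (inecc V E1 a)"
  define L0 where "L0 = real (Max ((\<lambda>x. gdist_from_set E0 S1 x) ` V))"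
  define L1 where "L1 = real (Max ((\<lambda>x. gdist_from_set E1 S1 x) ` V))"
  have finV: "finite V" and E0V: "E0 \<subseteq> V \<times> V" using G0 unfolding digraph_def by auto
  have E1V: "E1 \<subseteq> V \<times> V" using G1 unfolding digraph_def by auto
  have finS1: "finite S1" using S1 finV finite_subset by blast
  have S1ne: "S1 \<noteq> {}" using S1 np by auto
  have finS2: "finite S2" using S2 finV unfolding is_N_in_def using finite_subset by blast
  obtain s where s: "s \<in> S1" "s \<in> S2" using meet by blast
  have sV: "s \<in> V" using s S1 by blast
  have Vne: "V \<noteq> {}" using a by blast
  have reach0: "(u, v) \<in> E0\<^sup>*" if "u \<in> V" "v \<in> V" for u v using G0 that unfolding strongly_connected_def by blast
  have reach1: "(u, v) \<in> E1\<^sup>*" if "u \<in> V" "v \<in> V" for u v using G1 that unfolding strongly_connected_def by blast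
  have le_L1: "real (gdist_from_set E1 S1 x) \<le> L1" if "x \<in> V" for x
    unfolding L1_def using finV that by simp
  have le_\<delta>: "gdist E1 x a \<le> inecc V E1 a" if "x \<in> V" for x
    unfolding inecc_def using finV that by simp
  have le_\<delta>0: "gdist E0 x a \<le> inecc V E0 a" if "x \<in> V" for x
    unfolding inecc_def using finV that by simp
  have \<delta>0: "\<delta> \<ge> 0" unfolding \<delta>_def by simp
  show "(\<forall>x\<in>V. int (gdist_from_set E1 S1 x) \<le> \<lfloor>(p + 2 * \<epsilon>) * real (inecc V E1 a)\<rfloor>)
          \<or> (\<forall>x\<in>V. int (gdist_to_set E1 x S2) \<le> \<lceil>(q + 2 * \<epsilon>) * real (inecc V E1 a)\<rceil>)"
  proof (cases "\<forall>x\<in>V. int (gdist_from_set E1 S1 x) \<le> \<lfloor>(p + 2 * \<epsilon>) * real (inecc V E1 a)\<rfloor>")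
    case True thus ?thesis by (rule disjI1)
  next
    case False
    note False
    then obtain x0 where x0: "x0 \<in> V" "\<lfloor>(p + 2 * \<epsilon>) * \<delta>\<rfloor> < int (gdist_from_set E1 S1 x0)"
      unfolding \<delta>_def by force
    have "(p + 2 * \<epsilon>) * \<delta> < real (gdist_from_set E1 S1 x0)"
      using x0(2) by (metis floor_less_iff of_int_of_nat_eq)
    hence L1big: "(p + 2 * \<epsilon>) * \<delta> < L1" using le_L1[OF x0(1)] by (rule less_le_trans)
    have fin_bound: "int (gdist_to_set E1 y S2) \<le> \<lceil>(q + 2 * \<epsilon>) * \<delta>\<rceil>"
      if y: "y \<in> V" and kb: "\<exists>(E::('a \<times> 'a) set) (k::nat) (D::nat). E \<subseteq> E0 \<and> E \<subseteq> E1 \<and> (y, a) \<in> E ^^ k \<and> gdist E0 s a = D \<and> D \<ge> 1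
                    \<and> real k - real D < (q + 2 * \<epsilon>) * \<delta>" for y
    proof -
      obtain E k D where EkD: "E \<subseteq> E0" "E \<subseteq> E1" "(y, a) \<in> E ^^ k" "gdist E0 s a = D" "D \<ge> 1"
        "real k - real D < (q + 2 * \<epsilon>) * \<delta>" using kb by blast
      have K: "int (gdist_to_set E1 y S2) \<le> max 0 (int k + 1 - int D)"
        using key[OF finV E0V EkD(1) EkD(2) y EkD(3) S2 s(2) EkD(4,5)] .
      have r0: "(q + 2 * \<epsilon>) * \<delta> \<ge> 0" by (rule mult_nonneg_nonneg) (use pq eps \<delta>0 in linarith)+
      have c0: "0 \<le> \<lceil>(q + 2 * \<epsilon>) * \<delta>\<rceil>" using r0 by simp
      have "int k - int D < \<lceil>(q + 2 * \<epsilon>) * \<delta>\<rceil>"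
      proof -
        have h: "real_of_int (int k - int D) < (q + 2 * \<epsilon>) * \<delta>" using EkD(6) by simp
        show ?thesis using h less_ceiling_iff by blast
      qed
      hence "int k + 1 - int D \<le> \<lceil>(q + 2 * \<epsilon>) * \<delta>\<rceil>" by (rule int_aux1)
      thus ?thesis by (rule int_aux2[OF K c0])
    qed
    have B: "\<forall>x\<in>V. int (gdist_to_set E1 x S2) \<le> \<lceil>(q + 2 * \<epsilon>) * real (inecc V E1 a)\<rceil>"
    proof (rule ballI)
      fix y assume y: "y \<in> V"
      consider (i) "E1 \<subseteq> E0" "(1 - \<epsilon>) * L0 \<le> real (gdist_from_set E0 S1 a)"
        | (ii) "E0 \<subseteq> E1" "(1 - \<epsilon>) * real (inecc V E0 a) \<le> \<delta>"
        using cases unfolding L0_def \<delta>_def by (elim disjE conjE) auto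
      thus "int (gdist_to_set E1 y S2) \<le> \<lceil>(q + 2 * \<epsilon>) * real (inecc V E1 a)\<rceil>"
      proof cases
        case i
        note c = i
        define k where "k = gdist E1 y a"
        define D where "D = gdist E0 s a"
        have path: "(y, a) \<in> E1 ^^ k" unfolding k_def by (rule gdist_path[OF reach1[OF y a]])
        have kd: "real k \<le> \<delta>" unfolding k_def \<delta>_def using le_\<delta>[OF y] by simp
        have "gdist_from_set E0 S1 a \<le> D" unfolding D_def by (rule from_set_le[OF finS1 s(1)])
        hence Dl: "real D \<ge> (1 - \<epsilon>) * L0" using c(2) by linarith
        have L1L0: "L1 \<le> L0 * (1 + \<epsilon>)" using ecc1 unfolding L1_def L0_def by simp
        have R: "real k - real D < (q + 2 * \<epsilon>) * \<delta> \<and> real D > 0"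
          by (rule arith_i[OF eps pq \<delta>0 L1big L1L0 Dl kd])
        hence Dpos: "D \<ge> 1" by simp
        have E10: "E1 \<subseteq> E0" using c(1) .
        have "\<exists>(E::('a \<times> 'a) set) (k::nat) (D::nat). E \<subseteq> E0 \<and> E \<subseteq> E1 \<and> (y, a) \<in> E ^^ k \<and> gdist E0 s a = D \<and> D \<ge> 1
                    \<and> real k - real D < (q + 2 * \<epsilon>) * \<delta>"
          using R by (intro exI[of _ E1] exI[of _ k] exI[of _ D] conjI) (rule E10, rule subset_refl, rule path, rule D_def[symmetric], rule Dpos, erule conjunct1)
        hence "int (gdist_to_set E1 y S2) \<le> \<lceil>(q + 2 * \<epsilon>) * \<delta>\<rceil>" by (rule fin_bound[OF y])
        thus ?thesis unfolding \<delta>_def[symmetric] .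
      next
        case ii
        note c = ii
        define k where "k = gdist E0 y a"
        define D where "D = gdist E0 s a"
        have path: "(y, a) \<in> E0 ^^ k" unfolding k_def by (rule gdist_path[OF reach0[OF y a]])
        have kd: "(1 - \<epsilon>) * real k \<le> \<delta>"
        proof -
          have "real k \<le> real (inecc V E0 a)" unfolding k_def using le_\<delta>0[OF y] by simp
          hence "(1 - \<epsilon>) * real k \<le> (1 - \<epsilon>) * real (inecc V E0 a)" using eps by (intro mult_left_mono) auto
          thus ?thesis using c(2) by linarith
        qed
        have L1L0: "L1 \<le> L0"
        proof -
          have "Max ((\<lambda>x. gdist_from_set E1 S1 x) ` V) \<le> Max ((\<lambda>x. gdist_from_set E0 S1 x) ` V)"
          proof (subst Max_le_iff, simp add: finV, simp add: Vne, safe)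
            fix x assume x: "x \<in> V"
            have rx: "\<forall>v\<in>S1. (v, x) \<in> E0\<^sup>*" using reach0 x S1 by blast
            have "gdist_from_set E1 S1 x \<le> gdist_from_set E0 S1 x"
              using from_set_mono[OF finS1 S1ne c(1) rx] .
            also have "\<dots> \<le> Max ((\<lambda>x. gdist_from_set E0 S1 x) ` V)" using finV x by simp
            finally show "gdist_from_set E1 S1 x \<le> Max ((\<lambda>x. gdist_from_set E0 S1 x) ` V)" .
          qed
          thus ?thesis unfolding L1_def L0_def by simp
        qed
        have E01: "E0 \<subseteq> E1" using c(1) .
        have "gdist E1 s a \<le> D" unfolding D_def using gdist_mono[OF E01 reach0[OF sV a]] .
        moreover have "gdist_from_set E1 S1 a \<le> gdist E1 s a" by (rule from_set_le[OF finS1 s(1)])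
        ultimately have "gdist_from_set E1 S1 a \<le> D" by linarith
        hence r2: "real (gdist_from_set E1 S1 a) \<le> real D" by simp
        have r3: "(1 - \<epsilon>) * L0 = L0 * (1 - \<epsilon>)" by (rule mult.commute)
        have Dl: "real D \<ge> (1 - \<epsilon>) * L0" using r2 r3 da1(1) unfolding L0_def by linarith
        have R: "real k - real D < (q + 2 * \<epsilon>) * \<delta> \<and> real D > 0"
          by (rule arith_ii[OF eps pq \<delta>0 L1big L1L0 Dl kd])
        hence Dpos: "D \<ge> 1" by simp
        have "\<exists>(E::('a \<times> 'a) set) (k::nat) (D::nat). E \<subseteq> E0 \<and> E \<subseteq> E1 \<and> (y, a) \<in> E ^^ k \<and> gdist E0 s a = D \<and> D \<ge> 1
                    \<and> real k - real D < (q + 2 * \<epsilon>) * \<delta>"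
          using R by (intro exI[of _ E0] exI[of _ k] exI[of _ D] conjI) (rule subset_refl, rule E01, rule path, rule D_def[symmetric], rule Dpos, erule conjunct1)
        hence "int (gdist_to_set E1 y S2) \<le> \<lceil>(q + 2 * \<epsilon>) * \<delta>\<rceil>" by (rule fin_bound[OF y])
        thus ?thesis unfolding \<delta>_def[symmetric] .
      qed
    qed
    thus ?thesis by (rule disjI2)
  qed
qed

end
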